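(* Let $X$ be a non-negative absolutely continuous random variable with distribution function $F$, density $f$ and reversed hazard rate $\lambda(t)=f(t)/F(t)$, and let $\mu>0$. Then $X$ has an exponential distribution with mean $\mu$ if and only if, for $s\ge 1$ and all $t>0$, $$\bar B_s(F;t)=\mu\,(\lambda(t))^s\,\frac{e^{st/\mu}-1}{s}.$$
   Context: The past entropy generating function is $\bar B_s(F;t)=\int_0^t\left(\frac{f(x)}{F(t)}\right)^s dx$, $s\ge 1$, for $t$ with $F(t)>0$. *)

theory Defs
  imports "HOL-Probability.Probability"
begin

definition past_egf :: "(real \<Rightarrow> real) \<Rightarrow> (real \<Rightarrow> real) \<Rightarrow> real \<Rightarrow> real \<Rightarrow> real" where
  "past_egf f F s t = integral {0..t} (\<lambda>x. (f x / F t) powr s)"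

definition rev_hazard :: "(real \<Rightarrow> real) \<Rightarrow> (real \<Rightarrow> real) \<Rightarrow> real \<Rightarrow> real" where
  "rev_hazard f F t = f t / F t"

end

theory Submission
  imports Defs
begin

lemma ode_part:
  fixes h :: "real \<Rightarrow> real" and \<mu> s T :: real
  assumes mu: "\<mu> > 0" and s: "s > 0" and T: "T > 0"
    and int: "\<And>t. 0 < t \<Longrightarrow> t < T \<Longrightarrow> h integrable_on {0..t}"
    and eq: "\<And>t. 0 < t \<Longrightarrow> t < T \<Longrightarrow> integral {0..t} h = \<mu> / s * h t * (exp (s * t / \<mu>) - 1)"
  shows "\<exists>A. \<forall>t\<in>{0<..<T}. h t * exp (s * t / \<mu>) = A"
proof -
  define E where "E t = exp (s * t / \<mu>) - 1" for t
  define G where "G t = integral {0..t} h" for t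
  have Epos: "E t > 0" if "t > 0" for t
    using that mu s by (simp add: E_def)
  have hG: "h t = s / \<mu> * G t / E t" if "0 < t" "t < T" for t
  proof -
    have "G t = \<mu> / s * h t * E t" using eq[OF that] by (simp add: G_def E_def)
    then show ?thesis using Epos[OF that(1)] mu s by (simp add: field_simps)
  qed
  have Gcont: "isCont G t" if "0 < t" "t < T" for t
  proof -
    define c where "c = (t + T) / 2"
    have "t < c" "c < T" using that by (auto simp: c_def)
    have "continuous_on {0..c} G"
      unfolding G_def by (rule indefinite_integral_continuous_1) (use int \<open>t < c\<close> \<open>c < T\<close> that in auto)
    moreover have "t \<in> interior {0..c}" using that \<open>t < c\<close> by simp
    ultimately show ?thesis using continuous_on_interior by blast
  qed
  have hcont: "isCont h t" if "0 < t" "t < T" for t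
  proof -
    have ev: "eventually (\<lambda>x. x \<in> {0<..<T}) (nhds t)"
      using that by (intro eventually_nhds_in_open) auto
    have "eventually (\<lambda>x. h x = s / \<mu> * G x / E x) (nhds t)"
      using ev by eventually_elim (use hG in auto)
    moreover have "isCont (\<lambda>x. s / \<mu> * G x / E x) t"
      unfolding E_def using Gcont[OF that] Epos[OF that(1)] unfolding E_def
      by (intro continuous_intros) auto
    ultimately show ?thesis using isCont_cong[of h "\<lambda>x. s / \<mu> * G x / E x" t] by simp
  qed
  have Gder: "(G has_real_derivative h t) (at t)" if "0 < t" "t < T" for t
  proof -
    define c where "c = (t + T) / 2"
    have "t < c" "c < T" using that by (auto simp: c_def)
    have "(G has_vector_derivative h t) (at t within ({0..c} - {}))"
      unfolding G_def
      by (rule integral_has_vector_derivative_continuous_at)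
         (use int \<open>t < c\<close> \<open>c < T\<close> that hcont[OF that] in \<open>auto intro: continuous_at_imp_continuous_within\<close>)
    moreover have "t \<in> interior {0..c}" using that \<open>t < c\<close> by simp
    ultimately have "(G has_vector_derivative h t) (at t)"
      using at_within_interior[of t "{0..c}"] by (metis Diff_empty)
    then show ?thesis unfolding has_real_derivative_iff_has_vector_derivative .
  qed
  define Q where "Q t = G t + G t / E t" for t
  have Qder: "(Q has_real_derivative 0) (at t within {0<..<T})" if "t \<in> {0<..<T}" for t
  proof -
    have t: "0 < t" "t < T" using that by auto
    have Eder: "(E has_real_derivative exp (s * t / \<mu>) * (s / \<mu>)) (at t)"
      unfolding E_def using mu by (auto intro!: derivative_eq_intros)
    have "(Q has_real_derivative h t + (h t * E t - G t * (exp (s * t / \<mu>) * (s / \<mu>))) / (E t * E t)) (at t)"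
      unfolding Q_def[abs_def]
      by (intro derivative_intros Gder[OF t] Eder) (use Epos[OF t(1)] in auto)
    moreover have "h t + (h t * E t - G t * (exp (s * t / \<mu>) * (s / \<mu>))) / (E t * E t) = 0"
    proof -
      have "G t = \<mu> / s * h t * E t" using hG[OF t] Epos[OF t(1)] mu s by (simp add: field_simps)
      then have "G t * (exp (s * t / \<mu>) * (s / \<mu>)) = h t * E t * exp (s * t / \<mu>)"
        using mu s by simp
      then have "h t * E t - G t * (exp (s * t / \<mu>) * (s / \<mu>)) = - h t * (E t * E t)"
        by (simp add: E_def algebra_simps)
      then show ?thesis using Epos[OF t(1)] by simp
    qed
    ultimately show ?thesis by (metis has_field_derivative_at_within)
  qed
  obtain c where c: "\<forall>x\<in>{0<..<T}. Q x = c"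
    using has_field_derivative_zero_constant[of "{0<..<T}" Q] Qder by auto
  have "h t * exp (s * t / \<mu>) = s / \<mu> * c" if "t \<in> {0<..<T}" for t
  proof -
    have t: "0 < t" "t < T" using that by auto
    have "h t * exp (s * t / \<mu>) = s / \<mu> * G t / E t * (E t + 1)" using hG[OF t] by (simp add: E_def)
    also have "\<dots> = s / \<mu> * Q t" using Epos[OF t(1)] by (simp add: Q_def field_simps)
    finally show ?thesis using c that by simp
  qed
  then show ?thesis by blast
qed
lemma fwd_part:
  fixes M :: "'a measure" and X :: "'a \<Rightarrow> real" and f F :: "real \<Rightarrow> real"
    and \<mu> s :: real
  assumes "prob_space M"
    and D: "distributed M lborel X (exponential_density (1 / \<mu>))"
    and Fdef: "\<And>t. F t = measure M {\<omega> \<in> space M. X \<omega> \<le> t}"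
    and Fder: "\<And>t. t > 0 \<Longrightarrow> (F has_real_derivative f t) (at t)"
    and mu: "\<mu> > 0"
    and s: "s \<ge> 1"
  shows "\<forall>t>0. F t > 0 \<and>
       past_egf f F s t = \<mu> * (rev_hazard f F t) powr s * (exp (s * t / \<mu>) - 1) / s"
proof (intro allI impI)
  interpret prob_space M by fact
  have Fe: "F t = 1 - exp (- t / \<mu>)" if "0 \<le> t" for t
    using exponential_distributedD_le[OF D that] mu by (simp add: Fdef)
  have fe: "f t = exp (- t / \<mu>) / \<mu>" if "0 < t" for t
  proof -
    have "((\<lambda>x. 1 - exp (- x / \<mu>)) has_real_derivative exp (- t / \<mu>) / \<mu>) (at t)"
      using mu by (auto intro!: derivative_eq_intros simp: field_simps)
    then have "(F has_real_derivative exp (- t / \<mu>) / \<mu>) (at t)"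
      by (rule has_field_derivative_transform_within_open[where S="{0<..}"]) (use that Fe in auto)
    then show ?thesis using Fder[OF that] DERIV_unique by blast
  qed
  fix t :: real assume t: "t > 0"
  have Ft: "F t > 0" using Fe[of t] t mu by simp
  define a where "a = 1 / (\<mu> * F t)"
  have a: "a > 0" using Ft mu by (simp add: a_def)
  have q: "f x / F t = a * exp (- x / \<mu>)" if "x > 0" for x
    using fe[OF that] by (simp add: a_def)
  have qp: "(f x / F t) powr s = a powr s * exp (- x / \<mu> * s)" if "x > 0" for x
    using q[OF that] a by (simp add: powr_mult exp_powr_real)
  have "((\<lambda>x. exp (- x / \<mu> * s)) has_integral
          ((- (\<mu> / s) * exp (- t / \<mu> * s)) - (- (\<mu> / s) * exp (- 0 / \<mu> * s)))) {0..t}"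
    by (rule fundamental_theorem_of_calculus)
       (use t mu s in \<open>auto intro!: derivative_eq_intros simp: has_real_derivative_iff_has_vector_derivative[symmetric]\<close>)
  then have J: "((\<lambda>x. a powr s * exp (- x / \<mu> * s)) has_integral
          a powr s * (\<mu> / s * (1 - exp (- t / \<mu> * s)))) {0..t}"
    by (intro has_integral_mult_right) (simp add: algebra_simps)
  have "((\<lambda>x. (f x / F t) powr s) has_integral
          a powr s * (\<mu> / s * (1 - exp (- t / \<mu> * s)))) {0..t}"
    by (rule has_integral_spike_finite[where S="{0}", OF _ _ J]) (auto simp: qp)
  then have I: "past_egf f F s t = a powr s * (\<mu> / s * (1 - exp (- t / \<mu> * s)))"
    unfolding past_egf_def by (rule integral_unique)
  have ee: "exp (- t / \<mu> * s) * exp (s * t / \<mu>) = 1"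
    by (simp add: mult_exp_exp)
  have "\<mu> * (rev_hazard f F t) powr s * (exp (s * t / \<mu>) - 1) / s
      = \<mu> * (a powr s * exp (- t / \<mu> * s)) * (exp (s * t / \<mu>) - 1) / s"
    using qp[OF t] by (simp add: rev_hazard_def)
  also have "\<dots> = a powr s * (\<mu> / s * (exp (- t / \<mu> * s) * exp (s * t / \<mu>) - exp (- t / \<mu> * s)))"
    using s by (simp add: field_simps)
  also have "\<dots> = past_egf f F s t" unfolding I ee ..
  finally show "F t > 0 \<and> past_egf f F s t = \<mu> * (rev_hazard f F t) powr s * (exp (s * t / \<mu>) - 1) / s"
    using Ft by simp
qed
lemma bwd_part:
  fixes M :: "'a measure" and X :: "'a \<Rightarrow> real" and f F :: "real \<Rightarrow> real"
    and \<mu> s :: real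
  assumes "prob_space M"
    and D: "distributed M lborel X f"
    and fnn: "\<And>x. f x \<ge> 0"
    and Xnn: "\<And>\<omega>. \<omega> \<in> space M \<Longrightarrow> X \<omega> \<ge> 0"
    and mu: "\<mu> > 0"
    and s1: "s \<ge> 1"
    and H: "\<forall>t>0. F t > 0 \<and>
       past_egf f F s t = \<mu> * (rev_hazard f F t) powr s * (exp (s * t / \<mu>) - 1) / s"
  shows "distributed M lborel X (exponential_density (1 / \<mu>))"
proof -
  interpret prob_space M by fact
  have s: "s > 0" using s1 by simp
  have fmeas: "f \<in> borel_measurable borel"
    using distributed_real_measurable[OF _ D] fnn by (simp add: measurable_lborel2)
  define h where "h x = f x powr s" for x
  have hnn: "h x \<ge> 0" for x by (simp add: h_def)
  have hmeas: "h \<in> borel_measurable borel"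
    unfolding h_def using fmeas by measurable
  have Heq: "integral {0..t} h = \<mu> / s * h t * (exp (s * t / \<mu>) - 1)" if t: "0 < t" for t
  proof -
    have Ft: "F t > 0" and P: "past_egf f F s t = \<mu> * (rev_hazard f F t) powr s * (exp (s * t / \<mu>) - 1) / s"
      using H t by auto
    have "past_egf f F s t = integral {0..t} h / F t powr s"
      unfolding past_egf_def h_def powr_divide integral_divide ..
    moreover have "rev_hazard f F t powr s = h t / F t powr s"
      unfolding rev_hazard_def h_def powr_divide ..
    moreover have "F t powr s > 0" using Ft by simp
    ultimately have "integral {0..t} h / F t powr s = (\<mu> / s * h t * (exp (s * t / \<mu>) - 1)) / F t powr s"
      using P by (simp add: mult.commute)
    moreover have "F t powr s \<noteq> 0" using Ft by simp
    ultimately show ?thesis by (metis divide_cancel_right)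
  qed
  have Epos: "exp (s * t / \<mu>) - 1 > 0" if "t > 0" for t
    using that s mu by simp
  have notI: "h t = 0" if "0 < t" "\<not> h integrable_on {0..t}" for t
  proof -
    have "\<mu> / s * h t * (exp (s * t / \<mu>) - 1) = 0"
      using Heq[OF that(1)] not_integrable_integral[OF that(2)] by simp
    then show ?thesis using Epos[OF that(1)] that(1) s mu by simp
  qed
  have allint: "h integrable_on {0..b}" if b: "b > 0" for b
  proof (rule ccontr)
    assume nb: "\<not> h integrable_on {0..b}"
    define S where "S = {t. 0 < t \<and> \<not> h integrable_on {0..t}}"
    define T where "T = Inf S"
    have Sne: "S \<noteq> {}" using nb b by (auto simp: S_def)
    have Sbdd: "bdd_below S" unfolding S_def by (rule bdd_belowI[of _ 0]) auto
    have T0: "T \<ge> 0" unfolding T_def using Sne by (intro cInf_greatest) (auto simp: S_def)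
    have below: "h integrable_on {0..t}" if "0 < t" "t < T" for t
    proof (rule ccontr)
      assume "\<not> h integrable_on {0..t}"
      then have "t \<in> S" using that by (auto simp: S_def)
      then have "T \<le> t" unfolding T_def using Sbdd by (rule cInf_lower)
      then show False using that by simp
    qed
    have above: "h t = 0" if tT: "t > T" for t
    proof -
      obtain x where x: "x \<in> S" "x < t"
        using cInf_less_iff[OF Sne Sbdd, of t] tT by (auto simp: T_def)
      have "\<not> h integrable_on {0..t}"
      proof
        assume "h integrable_on {0..t}"
        then have "h integrable_on {0..x}" by (rule integrable_on_subinterval) (use x in auto)
        then show False using x by (auto simp: S_def)
      qed
      then show ?thesis using notI T0 tT by simp
    qed
    obtain B where B: "B \<ge> 0" "\<And>x. 0 < x \<Longrightarrow> x \<noteq> T \<Longrightarrow> h x \<le> B"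
    proof (cases "T > 0")
      case True
      obtain A where A: "\<forall>t\<in>{0<..<T}. h t * exp (s * t / \<mu>) = A"
        using ode_part[OF mu s True below Heq] by blast
      show ?thesis
      proof (rule that[of "max A 0"])
        fix x :: real assume x: "0 < x" "x \<noteq> T"
        show "h x \<le> max A 0"
        proof (cases "x < T")
          case True
          have "h x * 1 \<le> h x * exp (s * x / \<mu>)"
            using hnn[of x] x s mu by (intro mult_left_mono) auto
          then show ?thesis using A True x by auto
        next
          case False
          then show ?thesis using above x by simp
        qed
      qed simp
    next
      case False
      then show ?thesis using that[of 0] above T0 by fastforce
    qed
    define h' where "h' x = (if x = 0 \<or> x = T then 0 else h x)" for x
    have "h' integrable_on {0..b}"
    proof (rule measurable_bounded_by_integrable_imp_integrable[where g="\<lambda>_. B"])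
      have "h' \<in> borel_measurable borel" unfolding h'_def using hmeas by measurable
      then have "h' \<in> borel_measurable lborel"
        unfolding measurable_lborel2 .
      then have "h' \<in> borel_measurable lebesgue"
        by (rule measurable_completion)
      then show "h' \<in> borel_measurable (lebesgue_on {0..b})"
        by (rule measurable_restrict_space1)
      show "(\<lambda>_. B) integrable_on {0..b}" by (rule Henstock_Kurzweil_Integration.integrable_const_ivl)
      show "norm (h' x) \<le> B" if "x \<in> {0..b}" for x
      proof (cases "x = 0 \<or> x = T")
        case True
        then show ?thesis using B(1) by (simp add: h'_def)
      next
        case False
        then have "0 < x" "x \<noteq> T" using that by auto
        then show ?thesis using B(2)[of x] hnn[of x] False by (simp add: h'_def)
      qed
    qed simp
    then have "h integrable_on {0..b}"
      by (rule integrable_spike_finite[where S="{0, T}", rotated 2]) (auto simp: h'_def)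
    then show False using nb by simp
  qed
  define A where "A = h 1 * exp (s * 1 / \<mu>)"
  have hA: "h t * exp (s * t / \<mu>) = A" if tpos: "t > 0" for t
  proof -
    obtain A' where A': "\<forall>x\<in>{0<..<t+2}. h x * exp (s * x / \<mu>) = A'"
      using ode_part[OF mu s _ allint Heq, of "t+2"] tpos by auto
    show ?thesis using A'[rule_format, of t] A'[rule_format, of 1] tpos by (simp add: A_def)
  qed
  have A0: "A \<ge> 0" unfolding A_def using hnn by simp
  define c where "c = A powr (1 / s)"
  have c0: "c \<ge> 0" by (simp add: c_def)
  have fe: "f t = c * exp (- t / \<mu>)" if "t > 0" for t
  proof -
    have "f t = h t powr (1 / s)"
      using fnn[of t] s by (simp add: h_def powr_powr)
    also have "h t = A * exp (- (s * t / \<mu>))"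
      using hA[OF that] by (simp add: exp_minus field_simps)
    also have "(A * exp (- (s * t / \<mu>))) powr (1 / s) = c * exp (- (s * t / \<mu>) * (1 / s))"
      using A0 by (simp add: powr_mult exp_powr_real c_def)
    also have "- (s * t / \<mu>) * (1 / s) = - t / \<mu>" using s by (simp add: field_simps)
    finally show ?thesis .
  qed
  have Xm: "X \<in> measurable M lborel" using distributed_measurable[OF D] .
  have fm: "(\<lambda>x. ennreal (f x)) \<in> borel_measurable lborel" using distributed_borel_measurable[OF D] .
  define ed where "ed = exponential_density (1 / \<mu>)"
  have ednn: "ed x \<ge> 0" for x using mu by (simp add: ed_def exponential_density_def)
  have edm: "(\<lambda>x. ennreal (ed x)) \<in> borel_measurable lborel"
    unfolding ed_def exponential_density_def by measurable
  have neg: "AE x in lborel. x < 0 \<longrightarrow> f x = 0"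
  proof -
    have "emeasure (density lborel (\<lambda>x. ennreal (f x))) {..<0} = emeasure (distr M lborel X) {..<0}"
      using distributed_distr_eq_density[OF D] by simp
    also have "\<dots> = emeasure M (X -` {..<0} \<inter> space M)" by (rule emeasure_distr[OF Xm]) simp
    also have "X -` {..<0} \<inter> space M = {}" using Xnn by force
    finally have "(\<integral>\<^sup>+ x. ennreal (f x) * indicator {..<0} x \<partial>lborel) = 0"
      using fm by (simp add: emeasure_density)
    then have "AE x in lborel. ennreal (f x) * indicator {..<0} x = 0"
      using fm by (subst (asm) nn_integral_0_iff_AE) auto
    then show ?thesis
    proof (rule AE_mp, intro AE_I2 impI)
      fix x :: real assume "ennreal (f x) * indicator {..<0} x = 0" "x < 0"
      then have "f x \<le> 0" by (simp add: ennreal_eq_0_iff)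
      then show "f x = 0" using fnn[of x] by simp
    qed
  qed
  have AEf: "AE x in lborel. f x = c * \<mu> * ed x"
    using neg AE_lborel_singleton[of 0]
  proof eventually_elim
    case (elim x)
    show ?case
    proof (cases "x < 0")
      case True
      then show ?thesis using elim by (simp add: ed_def exponential_density_def)
    next
      case False
      then have "x > 0" using elim by simp
      then show ?thesis using mu by (simp add: fe ed_def exponential_density_def field_simps)
    qed
  qed
  have one_f: "(\<integral>\<^sup>+ x. ennreal (f x) \<partial>lborel) = 1"
  proof -
    have "prob_space (distr M lborel X)" by (rule prob_space_distr[OF Xm])
    then have "emeasure (distr M lborel X) UNIV = 1"
      using prob_space.emeasure_space_1 by fastforce
    then have "emeasure (density lborel (\<lambda>x. ennreal (f x))) UNIV = 1"
      using distributed_distr_eq_density[OF D] by simp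
    then show ?thesis using fm by (simp add: emeasure_density)
  qed
  have one_e: "(\<integral>\<^sup>+ x. ennreal (ed x) \<partial>lborel) = 1"
  proof -
    have "prob_space (density lborel (\<lambda>x. ennreal (ed x)))"
      using prob_space_exponential_density[of "1 / \<mu>"] mu by (simp add: ed_def)
    then have "emeasure (density lborel (\<lambda>x. ennreal (ed x))) UNIV = 1"
      using prob_space.emeasure_space_1 by fastforce
    then show ?thesis using edm by (simp add: emeasure_density)
  qed
  have "(\<integral>\<^sup>+ x. ennreal (f x) \<partial>lborel) = (\<integral>\<^sup>+ x. ennreal (c * \<mu>) * ennreal (ed x) \<partial>lborel)"
    using AEf
  proof (rule nn_integral_cong_AE[OF AE_mp], intro AE_I2 impI)
    fix x assume "f x = c * \<mu> * ed x"
    then show "ennreal (f x) = ennreal (c * \<mu>) * ennreal (ed x)"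
      using c0 mu ednn[of x] by (simp add: ennreal_mult)
  qed
  also have "\<dots> = ennreal (c * \<mu>) * (\<integral>\<^sup>+ x. ennreal (ed x) \<partial>lborel)"
    by (rule nn_integral_cmult[OF edm])
  finally have "c * \<mu> = 1" using one_f one_e by simp
  then have AE2: "AE x in lborel. ennreal (f x) = ennreal (ed x)"
    using AEf by (auto elim: AE_mp)
  have "distributed M lborel X (\<lambda>x. ennreal (ed x))"
    using distributed_cong_density[THEN iffD1, OF AE2 edm fm D] .
  then show ?thesis by (simp add: ed_def)
qed
theorem theorem3p4:
  fixes M :: "'a measure" and X :: "'a \<Rightarrow> real" and f F :: "real \<Rightarrow> real"
    and \<mu> s :: real
  assumes "prob_space M"
    and "distributed M lborel X f"
    and "\<And>x. f x \<ge> 0"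
    and "\<And>\<omega>. \<omega> \<in> space M \<Longrightarrow> X \<omega> \<ge> 0"
    and "\<And>t. F t = measure M {\<omega> \<in> space M. X \<omega> \<le> t}"
    and "\<And>t. t > 0 \<Longrightarrow> (F has_real_derivative f t) (at t)"
    and "\<mu> > 0"
    and "s \<ge> 1"
  shows "distributed M lborel X (exponential_density (1 / \<mu>)) \<longleftrightarrow>
    (\<forall>t>0. F t > 0 \<and>
       past_egf f F s t = \<mu> * (rev_hazard f F t) powr s * (exp (s * t / \<mu>) - 1) / s)"
proof
  assume "distributed M lborel X (exponential_density (1 / \<mu>))"
  then show "\<forall>t>0. F t > 0 \<and>
       past_egf f F s t = \<mu> * (rev_hazard f F t) powr s * (exp (s * t / \<mu>) - 1) / s"
    using fwd_part[OF assms(1) _ assms(5,6,7,8)] by blast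
next
  assume "\<forall>t>0. F t > 0 \<and>
       past_egf f F s t = \<mu> * (rev_hazard f F t) powr s * (exp (s * t / \<mu>) - 1) / s"
  then show "distributed M lborel X (exponential_density (1 / \<mu>))"
    using bwd_part[OF assms(1,2,3,4,7,8)] by blast
qed

end
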